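(* Let $h=0$ and let $x$ be a piecewise constant functional order parameter as in the context, with $1-\lambda+\beta^2Q>0$ and $\beta^2\sigma^2(Q)\int_q^Qx(q')\,dq'<1$ for all $q\in[0,Q]$. Then for every $N$, $$\varphi_N(0;x)=\log\sigma(Q)+f(0,0;x),$$ where $f(\cdot,\cdot;x)$ is the solution of the Parisi equation $\partial_qf+\frac12\big(\partial_y^2f+x(q)(\partial_yf)^2\big)=0$ on $[0,Q]\times\mathbb R$ with final condition $f(Q,y)=\frac{\beta^2}{2}\sigma^2(Q)y^2$, i.e. $f(Q,y)=\frac{\beta^2}{2}\sigma^2(Q)y^2$ and, for $a=K,\dots,1$ and $q\in[q_{a-1},q_a]$, $$f(q,y)=\frac1{m_a}\log\mathbb E_g\exp\big(m_a f(q_a,y+\sqrt{q_a-q}\,g)\big)\quad(\text{resp. } f(q,y)=\mathbb E_g f(q_a,y+\sqrt{q_a-q}\,g)\text{ if } m_a=0),$$ with $g\sim\mathcal N(0,1)$.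
   Context: Fix $\beta>0$, $\lambda\in\mathbb R$, $h=0$. A piecewise constant functional order parameter $x$ is given by an integer $K\ge1$ and numbers $0=q_0\le q_1\le\dots\le q_K=Q$, $0\le m_1\le\dots\le m_K\le1$, with $x(q)=m_a$ for $q\in[q_{a-1},q_a)$. $\sigma(Q)=(1-\lambda+\beta^2Q)^{-1/2}$. Let $J_{ij}$ ($1\le i,j\le N$) and $J^a_i$ ($a=1,\dots,K$, $i=1,\dots,N$) be independent i.i.d. $\mathcal N(0,1)$; $\mathbb E_0$ is expectation over $J$, $\mathbb E_a$ over $(J^a_i)_i$. With $\mathbb E_z$ integration against the standard Gaussian measure on $\mathbb R^N$ and $C=-\beta^2Q$, for $t\in[0,1]$ $$\tilde Z_N(t;x)=\mathbb E_z\exp\Big(\beta\sqrt{\tfrac{t}{2N}}\sum_{i,j}J_{ij}z_iz_j-\tfrac{t\beta^2}{4N}\big(\textstyle\sum_iz_i^2\big)^2+\beta\sqrt{1-t}\sum_{a=1}^K\sqrt{q_a-q_{a-1}}\sum_iJ^a_iz_i+\tfrac{(1-t)C}{2}\sum_iz_i^2+\tfrac\lambda2\sum_iz_i^2\Big).$$ Set $Z_K=\tilde Z_N$, $Z_{a-1}=(\mathbb E_aZ_a^{m_a})^{1/m_a}$ for $a=K,\dots,1$ (with $Z_{a-1}=\exp\mathbb E_a\log Z_a$ if $m_a=0$), and $\varphi_N(t;x)=\frac1N\mathbb E_0\log Z_0$. *)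

theory Defs
  imports "HOL-Probability.Probability"
begin

definition gauss1 :: "real measure" where
  "gauss1 = density lborel std_normal_density"

definition gaussI :: "'i set \<Rightarrow> ('i \<Rightarrow> real) measure" where
  "gaussI I = PiM I (\<lambda>_. gauss1)"

definition xfun :: "nat \<Rightarrow> (nat \<Rightarrow> real) \<Rightarrow> (nat \<Rightarrow> real) \<Rightarrow> real \<Rightarrow> real" where
  "xfun K q m r =
     (if \<exists>a\<in>{1..K}. q (a-1) \<le> r \<and> r < q a
      then m (LEAST a. 1 \<le> a \<and> a \<le> K \<and> q (a-1) \<le> r \<and> r < q a) else 0)"

definition sigmaQ :: "real \<Rightarrow> real \<Rightarrow> real \<Rightarrow> real" where
  "sigmaQ beta lam Q = (1 - lam + beta^2 * Q) powr (-1/2)"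

text \<open>Interpolating partition function tilde Z_N(t;x), as a function of the disorder
  J0 (J_ij) and Js (Js a i = J^a_i).\<close>
definition Ztilde ::
  "real \<Rightarrow> real \<Rightarrow> nat \<Rightarrow> (nat \<Rightarrow> real) \<Rightarrow> nat \<Rightarrow> real \<Rightarrow>
   (nat \<times> nat \<Rightarrow> real) \<Rightarrow> (nat \<Rightarrow> nat \<Rightarrow> real) \<Rightarrow> real" where
  "Ztilde beta lam K q N t J0 Js =
    (integral\<^sup>L (gaussI {..<N}) (\<lambda>z.
       exp (beta * sqrt (t / (2 * real N)) * (\<Sum>i<N. \<Sum>j<N. J0 (i, j) * z i * z j)
            - t * beta^2 / (4 * real N) * (\<Sum>i<N. (z i)^2)^2
            + beta * sqrt (1 - t) * (\<Sum>a\<in>{1..K}. sqrt (q a - q (a-1)) * (\<Sum>i<N. Js a i * z i))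
            + (1 - t) * (- (beta^2 * q K)) / 2 * (\<Sum>i<N. (z i)^2)
            + lam / 2 * (\<Sum>i<N. (z i)^2))))"

definition Zstep ::
  "nat \<Rightarrow> nat \<Rightarrow> real \<Rightarrow> ((nat \<times> nat \<Rightarrow> real) \<Rightarrow> (nat \<Rightarrow> nat \<Rightarrow> real) \<Rightarrow> real)
   \<Rightarrow> (nat \<times> nat \<Rightarrow> real) \<Rightarrow> (nat \<Rightarrow> nat \<Rightarrow> real) \<Rightarrow> real" where
  "Zstep N a ma Z J0 Js =
    (if ma = 0 then exp (integral\<^sup>L (gaussI {..<N}) (\<lambda>g. ln (Z J0 (Js(a := g)))))
     else (integral\<^sup>L (gaussI {..<N}) (\<lambda>g. Z J0 (Js(a := g)) powr ma)) powr (1 / ma))"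

text \<open>Zlev n = Z_{K-n}.\<close>
primrec Zlev ::
  "real \<Rightarrow> real \<Rightarrow> nat \<Rightarrow> (nat \<Rightarrow> real) \<Rightarrow> (nat \<Rightarrow> real) \<Rightarrow> nat \<Rightarrow> real \<Rightarrow> nat
   \<Rightarrow> (nat \<times> nat \<Rightarrow> real) \<Rightarrow> (nat \<Rightarrow> nat \<Rightarrow> real) \<Rightarrow> real" where
  "Zlev beta lam K q m N t 0 = Ztilde beta lam K q N t"
| "Zlev beta lam K q m N t (Suc n) =
     Zstep N (K - n) (m (K - n)) (Zlev beta lam K q m N t n)"

definition phiN ::
  "real \<Rightarrow> real \<Rightarrow> nat \<Rightarrow> (nat \<Rightarrow> real) \<Rightarrow> (nat \<Rightarrow> real) \<Rightarrow> nat \<Rightarrow> real \<Rightarrow> real" where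
  "phiN beta lam K q m N t =
     (1 / real N) * (integral\<^sup>L (gaussI ({..<N} \<times> {..<N})) (\<lambda>J0.
        ln (Zlev beta lam K q m N t K J0 (\<lambda>_ _. 0))))"

definition fstep :: "real \<Rightarrow> real \<Rightarrow> (real \<Rightarrow> real) \<Rightarrow> real \<Rightarrow> real" where
  "fstep ma s h y =
    (if ma = 0 then (integral\<^sup>L gauss1 (\<lambda>g. h (y + sqrt s * g)))
     else 1 / ma * ln (integral\<^sup>L gauss1 (\<lambda>g. exp (ma * h (y + sqrt s * g)))))"

definition ffinal :: "real \<Rightarrow> real \<Rightarrow> real \<Rightarrow> real \<Rightarrow> real" where
  "ffinal beta lam Q y = beta^2 / 2 * (sigmaQ beta lam Q)^2 * y^2"

text \<open>fnode n = f(q_{K-n}, .).\<close>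
primrec fnode ::
  "real \<Rightarrow> real \<Rightarrow> nat \<Rightarrow> (nat \<Rightarrow> real) \<Rightarrow> (nat \<Rightarrow> real) \<Rightarrow> nat \<Rightarrow> real \<Rightarrow> real" where
  "fnode beta lam K q m 0 = ffinal beta lam (q K)"
| "fnode beta lam K q m (Suc n) =
     fstep (m (K - n)) (q (K - n) - q (K - n - 1)) (fnode beta lam K q m n)"

definition parisi_f ::
  "real \<Rightarrow> real \<Rightarrow> nat \<Rightarrow> (nat \<Rightarrow> real) \<Rightarrow> (nat \<Rightarrow> real) \<Rightarrow> real \<Rightarrow> real \<Rightarrow> real" where
  "parisi_f beta lam K q m r y =
    (if q K \<le> r then ffinal beta lam (q K) y
     else (let a = (LEAST a. 1 \<le> a \<and> a \<le> K \<and> q (a-1) \<le> r \<and> r < q a) in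
           fstep (m a) (q a - r) (fnode beta lam K q m (K - a)) y))"

end

theory Submission
  imports Defs
begin


lemma prob_gauss1: "prob_space gauss1"
  unfolding gauss1_def by (rule prob_space_normal_density) simp

lemma sets_gauss1[measurable_cong, simp]: "sets gauss1 = sets borel"
  unfolding gauss1_def by simp

lemma gauss_exp_quad:
  fixes \<alpha> \<beta> :: real
  assumes "\<alpha> < 1/2"
  shows "has_bochner_integral gauss1 (\<lambda>g. exp (\<alpha> * g^2 + \<beta> * g))
           ((1 - 2*\<alpha>) powr (-1/2) * exp (\<beta>^2 / (2 * (1 - 2*\<alpha>))))"
proof -
  define d where "d = 1 - 2*\<alpha>"
  have d: "d > 0" using assms d_def by simp
  define s where "s = 1 / sqrt d"
  define \<mu> where "\<mu> = \<beta> / d"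
  have eq: "std_normal_density g * exp (\<alpha> * g^2 + \<beta> * g)
      = (d powr (-1/2) * exp (\<beta>^2 / (2 * d))) * normal_density \<mu> s g" for g
  proof -
    have "normal_density \<mu> s g = sqrt d / sqrt (2*pi) * exp (- d * (g - \<mu>)^2 / 2)"
      using d unfolding normal_density_def s_def
      by (simp add: real_sqrt_divide power_divide field_simps real_sqrt_mult)
    moreover have "- d * (g - \<mu>)^2 / 2 = - (g^2)/2 + \<alpha> * g^2 + \<beta> * g - \<beta>^2/(2*d)"
    proof -
      have a: "\<alpha> = (1 - d)/2" using d_def by simp
      show ?thesis using d unfolding \<mu>_def a by (simp add: field_simps power2_eq_square)
    qed
    moreover have "d powr (-1/2) * sqrt d = 1"
      using d by (simp add: powr_minus powr_half_sqrt[symmetric] field_simps)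
    ultimately show ?thesis
    proof -
      assume n: "normal_density \<mu> s g = sqrt d / sqrt (2*pi) * exp (- d * (g - \<mu>)^2 / 2)"
        and e: "- d * (g - \<mu>)^2 / 2 = - (g^2)/2 + \<alpha> * g^2 + \<beta> * g - \<beta>^2/(2*d)"
        and p: "d powr (-1/2) * sqrt d = 1"
      have e1: "exp (- (g^2)/2) * exp (\<alpha> * g^2 + \<beta> * g) = exp (- d * (g - \<mu>)^2 / 2) * exp (\<beta>^2/(2*d))"
        unfolding e exp_add[symmetric] by (rule arg_cong[where f=exp]) simp
      have "std_normal_density g * exp (\<alpha> * g^2 + \<beta> * g) = 1 / sqrt (2*pi) * (exp (- (g^2)/2) * exp (\<alpha> * g^2 + \<beta> * g))"
        unfolding std_normal_density_def by simp
      also have "\<dots> = 1 / sqrt (2*pi) * exp (- d * (g - \<mu>)^2 / 2) * exp (\<beta>^2/(2*d))"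
        unfolding e1 by simp
      also have "\<dots> = (d powr (-1/2) * sqrt d) * (1 / sqrt (2*pi) * exp (- d * (g - \<mu>)^2 / 2) * exp (\<beta>^2/(2*d)))"
        unfolding p by simp
      also have "\<dots> = (d powr (-1/2) * exp (\<beta>^2 / (2 * d))) * normal_density \<mu> s g"
        unfolding n by (simp add: field_simps)
      finally show ?thesis .
    qed
  qed
  have "has_bochner_integral lborel (normal_density \<mu> s) 1"
  proof -
    have "s > 0" using d unfolding s_def by simp
    then show ?thesis by (simp add: has_bochner_integral_iff integrable_normal_density integral_normal_density)
  qed
  then have "has_bochner_integral lborel (\<lambda>g. (d powr (-1/2) * exp (\<beta>^2 / (2 * d))) * normal_density \<mu> s g)
        ((d powr (-1/2) * exp (\<beta>^2 / (2 * d))) * 1)"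
    by (rule has_bochner_integral_mult_right)
  then have "has_bochner_integral lborel (\<lambda>g. std_normal_density g *\<^sub>R exp (\<alpha> * g^2 + \<beta> * g))
        ((d powr (-1/2) * exp (\<beta>^2 / (2 * d))))"
    by (simp add: eq)
  then show ?thesis unfolding gauss1_def d_def
    by (intro has_bochner_integral_density) auto
qed

lemma gauss_poly2:
  fixes c0 c1 c2 :: real
  shows "has_bochner_integral gauss1 (\<lambda>g. c0 + c1 * g + c2 * g^2) (c0 + c2)"
proof -
  have m0: "has_bochner_integral lborel (\<lambda>x. std_normal_density x * x^(2*0)) 1"
    using std_normal_moment_even[of 0] by simp
  have m1: "has_bochner_integral lborel (\<lambda>x. std_normal_density x * x^(2*0+1)) 0"
    using std_normal_moment_odd[of 0] by simp
  have m2: "has_bochner_integral lborel (\<lambda>x. std_normal_density x * x^(2*1)) 1"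
    using std_normal_moment_even[of 1] by simp
  have "has_bochner_integral lborel (\<lambda>x. c0 * (std_normal_density x * x^(2*0)) + c1 * (std_normal_density x * x^(2*0+1))
     + c2 * (std_normal_density x * x^(2*1))) (c0 * 1 + c1 * 0 + c2 * 1)"
    by (intro has_bochner_integral_add has_bochner_integral_mult_right m0 m1 m2)
  then have "has_bochner_integral lborel (\<lambda>x. std_normal_density x *\<^sub>R (c0 + c1 * x + c2 * x^2)) (c0 + c2)"
    by (simp add: algebra_simps power2_eq_square)
  then show ?thesis unfolding gauss1_def
    by (intro has_bochner_integral_density) auto
qed

lemma quad_step0:
  fixes c B y s :: real
  assumes "s \<ge> 0"
  shows "has_bochner_integral gauss1 (\<lambda>g. c + (y + sqrt s * g)^2 / (2*B)) (c + y^2/(2*B) + s/(2*B))"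
proof -
  have H: "has_bochner_integral gauss1 (\<lambda>g. (c + y^2/(2*B)) + (y * sqrt s / B) * g + ((sqrt s)^2/(2*B)) * g^2)
          ((c + y^2/(2*B)) + (sqrt s)^2/(2*B))"
    by (rule gauss_poly2)
  have E: "(c + y^2/(2*B)) + (y * sqrt s / B) * g + ((sqrt s)^2/(2*B)) * g^2 = c + (y + sqrt s * g)^2 / (2*B)" for g
    by (simp add: power2_eq_square field_simps add_divide_distrib)
  show ?thesis
    by (rule has_bochner_integral_cong[THEN iffD1, OF refl _ _ H]) (use assms E in auto)
qed

lemma quad_step:
  fixes c B y s m :: real
  assumes "s \<ge> 0" "B > 0" "B - m * s > 0"
  shows "has_bochner_integral gauss1 (\<lambda>g. exp (m * (c + (y + sqrt s * g)^2 / (2*B))))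
     (exp (m * c) * ((B - m * s)/B) powr (-1/2) * exp (m * y^2 / (2*(B - m * s))))"
proof -
  define \<alpha> where "\<alpha> = m * s / (2*B)"
  define \<beta> where "\<beta> = m * y * sqrt s / B"
  define K where "K = m * c + m * y^2 / (2*B)"
  have a: "\<alpha> < 1/2" using assms unfolding \<alpha>_def by (simp add: field_simps)
  have d: "1 - 2*\<alpha> = (B - m * s)/B" using assms unfolding \<alpha>_def by (simp add: field_simps)
  have H: "has_bochner_integral gauss1 (\<lambda>g. exp K * exp (\<alpha> * g^2 + \<beta> * g))
     (exp K * ((1 - 2*\<alpha>) powr (-1/2) * exp (\<beta>^2 / (2 * (1 - 2*\<alpha>)))))"
    by (intro has_bochner_integral_mult_right gauss_exp_quad a)
  have E: "exp K * exp (\<alpha> * g^2 + \<beta> * g) = exp (m * (c + (y + sqrt s * g)^2 / (2*B)))" for g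
  proof -
    have sq: "(y + sqrt s * g)^2 = y^2 + 2 * y * sqrt s * g + s * g^2" using assms
      by (simp add: power2_eq_square algebra_simps)
    have "K + (\<alpha> * g^2 + \<beta> * g) = m * (c + (y + sqrt s * g)^2 / (2*B))"
      using assms unfolding K_def \<alpha>_def \<beta>_def sq
      by (simp add: field_simps)
    then show ?thesis by (simp add: exp_add[symmetric])
  qed
  have KX: "K + \<beta>^2 / (2 * (1 - 2*\<alpha>)) = m * c + m * y^2 / (2*(B - m * s))"
  proof -
    have b2: "\<beta>^2 = m^2 * y^2 * s / B^2" unfolding \<beta>_def using assms
      by (simp add: power_divide power_mult_distrib)
    show ?thesis unfolding d K_def b2 using assms
      by (simp add: power2_eq_square field_simps)
  qed
  have V: "exp K * ((1 - 2*\<alpha>) powr (-1/2) * exp (\<beta>^2 / (2 * (1 - 2*\<alpha>))))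
      = exp (m * c) * ((B - m * s)/B) powr (-1/2) * exp (m * y^2 / (2*(B - m * s)))"
  proof -
    have "exp K * exp (\<beta>^2 / (2 * (1 - 2*\<alpha>))) = exp (m * c) * exp (m * y^2 / (2*(B - m * s)))"
      by (simp only: exp_add[symmetric] KX)
    then show ?thesis unfolding d by (metis mult.assoc mult.commute)
  qed
  show ?thesis
    by (rule has_bochner_integral_cong[THEN iffD1, OF refl _ _ H]) (use E V in auto)
qed



lemma q_mono:
  fixes q :: "nat \<Rightarrow> real"
  assumes "\<And>a. 1 \<le> a \<Longrightarrow> a \<le> K \<Longrightarrow> q (a-1) \<le> q a"
  shows "i \<le> j \<Longrightarrow> j \<le> K \<Longrightarrow> q i \<le> q j"
proof (induction j)
  case 0 then show ?case by simp
next
  case (Suc j)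
  show ?case
  proof (cases "i = Suc j")
    case True then show ?thesis by simp
  next
    case False
    then have "q i \<le> q j" using Suc by simp
    also have "q j \<le> q (Suc j)" using assms[of "Suc j"] Suc.prems by simp
    finally show ?thesis .
  qed
qed

lemma xfun_on:
  fixes q :: "nat \<Rightarrow> real"
  assumes mono: "\<And>a. 1 \<le> a \<Longrightarrow> a \<le> K \<Longrightarrow> q (a-1) \<le> q a"
    and a: "1 \<le> a" "a \<le> K" and r: "q (a-1) \<le> r" "r < q a"
  shows "xfun K q m r = m a"
proof -
  have ex: "\<exists>a\<in>{1..K}. q (a-1) \<le> r \<and> r < q a" using a r by auto
  have "(LEAST a. 1 \<le> a \<and> a \<le> K \<and> q (a-1) \<le> r \<and> r < q a) = a"
  proof (rule Least_equality)
    show "1 \<le> a \<and> a \<le> K \<and> q (a-1) \<le> r \<and> r < q a" using a r by simp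
  next
    fix b assume b: "1 \<le> b \<and> b \<le> K \<and> q (b-1) \<le> r \<and> r < q b"
    show "a \<le> b"
    proof (rule ccontr)
      assume "\<not> a \<le> b"
      then have "q b \<le> q (a-1)" using q_mono[of K q, OF mono, of b "a-1"] a by simp
      then show False using b r by simp
    qed
  qed
  then show ?thesis unfolding xfun_def using ex by simp
qed

lemma xfun_piece:
  fixes q :: "nat \<Rightarrow> real"
  assumes mono: "\<And>a. 1 \<le> a \<Longrightarrow> a \<le> K \<Longrightarrow> q (a-1) \<le> q a"
    and a: "1 \<le> a" "a \<le> K"
  shows "(xfun K q m has_integral (m a * (q a - q (a-1)))) {q (a-1)..q a}"
proof -
  have le: "q (a-1) \<le> q a" using mono a by simp
  have H: "((\<lambda>x. m a) has_integral (m a * (q a - q (a-1)))) {q (a-1)..q a}"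
    using has_integral_const_real[of "m a" "q (a-1)" "q a"] le by (simp add: mult.commute)
  show ?thesis
    by (rule has_integral_spike_finite[of "{q a}", OF _ _ H])
       (use xfun_on[of K q, OF mono a] in auto)
qed

definition Sfun :: "nat \<Rightarrow> (nat \<Rightarrow> real) \<Rightarrow> (nat \<Rightarrow> real) \<Rightarrow> nat \<Rightarrow> real" where
  "Sfun K q m n = (\<Sum>j<n. m (K-j) * (q (K-j) - q (K-j-1)))"

lemma xfun_tail:
  fixes q :: "nat \<Rightarrow> real"
  assumes mono: "\<And>a. 1 \<le> a \<Longrightarrow> a \<le> K \<Longrightarrow> q (a-1) \<le> q a"
  shows "n \<le> K \<Longrightarrow> (xfun K q m has_integral Sfun K q m n) {q (K-n)..q K}"
proof (induction n)
  case 0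
  then show ?case unfolding Sfun_def using has_integral_refl(2)[of "xfun K q m" "q K"] by simp
next
  case (Suc n)
  define a where "a = K - n"
  have a: "1 \<le> a" "a \<le> K" using Suc.prems a_def by auto
  have e: "K - Suc n = a - 1" using a_def by simp
  have P: "(xfun K q m has_integral (m a * (q a - q (a-1)))) {q (a-1)..q a}"
    by (rule xfun_piece[of K q, OF mono a])
  have T: "(xfun K q m has_integral Sfun K q m n) {q a..q K}"
    using Suc a_def by simp
  have "(xfun K q m has_integral (m a * (q a - q (a-1)) + Sfun K q m n)) {q (a-1)..q K}"
    by (rule has_integral_combine[OF _ _ P T]) (use mono a q_mono[of K q, OF mono, of a K] in auto)
  moreover have "Sfun K q m (Suc n) = m a * (q a - q (a-1)) + Sfun K q m n"
    unfolding Sfun_def a_def by simp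
  ultimately show ?case unfolding e by simp
qed



lemma sigma_sq: "(D::real) > 0 \<Longrightarrow> (D powr (-1/2))^2 = 1 / D"
proof -
  assume D: "D > 0"
  have "(D powr (-1/2))^2 = D powr (-1/2) * D powr (-1/2)" by (simp add: power2_eq_square)
  also have "\<dots> = D powr (-1/2 + -1/2)" by (rule powr_add[symmetric])
  also have "\<dots> = D powr (- 1)" by simp
  also have "\<dots> = 1 / D" using D by (simp add: powr_minus divide_inverse)
  finally show ?thesis .
qed

definition Bn :: "real \<Rightarrow> real \<Rightarrow> nat \<Rightarrow> (nat \<Rightarrow> real) \<Rightarrow> (nat \<Rightarrow> real) \<Rightarrow> nat \<Rightarrow> real" where
  "Bn beta lam K q m n = (1 - lam + beta^2 * q K) / beta^2 - Sfun K q m n"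

lemma Bn_Suc: "n < K \<Longrightarrow> Bn beta lam K q m (Suc n) = Bn beta lam K q m n - m (K-n) * (q (K-n) - q (K-n-1))"
  unfolding Bn_def Sfun_def by simp

lemma fstep0: "fstep ma 0 h y = h y"
proof -
  interpret prob_space gauss1 by (rule prob_gauss1)
  show ?thesis unfolding fstep_def by (simp add: prob_space)
qed

lemma fnode_quad:
  fixes beta lam :: real and q m :: "nat \<Rightarrow> real"
  assumes beta: "beta > 0" and D: "1 - lam + beta^2 * q K > 0"
    and mono: "\<And>a. 1 \<le> a \<Longrightarrow> a \<le> K \<Longrightarrow> q (a-1) \<le> q a"
    and Bpos: "\<And>n. n \<le> K \<Longrightarrow> Bn beta lam K q m n > 0"
  shows "n \<le> K \<Longrightarrow> \<exists>c. fnode beta lam K q m n = (\<lambda>y. c + y^2 / (2 * Bn beta lam K q m n))"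
proof (induction n)
  case 0
  have "ffinal beta lam (q K) y = y^2 / (2 * Bn beta lam K q m 0)" for y
  proof -
    have S: "(sigmaQ beta lam (q K))^2 = 1 / (1 - lam + beta^2 * q K)"
      unfolding sigmaQ_def by (rule sigma_sq[OF D])
    show ?thesis unfolding ffinal_def Bn_def Sfun_def S using beta D
      by (simp add: field_simps)
  qed
  then have "fnode beta lam K q m 0 = (\<lambda>y. 0 + y^2 / (2 * Bn beta lam K q m 0))" by auto
  then show ?case by blast
next
  case (Suc n)
  define a where "a = K - n"
  define s where "s = q a - q (a-1)"
  define B where "B = Bn beta lam K q m n"
  have a: "1 \<le> a" "a \<le> K" using Suc.prems a_def by auto
  have s: "s \<ge> 0" using mono[OF a] s_def by simp
  have B: "B > 0" using Bpos Suc.prems B_def by simp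
  have B': "Bn beta lam K q m (Suc n) = B - m a * s"
    using Bn_Suc[of n K] Suc.prems unfolding a_def s_def B_def by simp
  have B'pos: "B - m a * s > 0" using Bpos[of "Suc n"] Suc.prems B' by simp
  obtain c where c: "fnode beta lam K q m n = (\<lambda>y. c + y^2 / (2 * B))"
    using Suc B_def by auto
  have fS: "fnode beta lam K q m (Suc n) = fstep (m a) s (\<lambda>y. c + y^2 / (2 * B))"
    using c unfolding a_def s_def by simp
  show ?case
  proof (cases "m a = 0")
    case True
    have "fstep (m a) s (\<lambda>y. c + y^2 / (2 * B)) y = (c + s/(2*B)) + y^2 / (2 * Bn beta lam K q m (Suc n))" for y
      unfolding fstep_def B' using True has_bochner_integral_integral_eq[OF quad_step0[OF s, of c y B]]
      by simp
    then show ?thesis unfolding fS by auto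
  next
    case False
    have "fstep (m a) s (\<lambda>y. c + y^2 / (2 * B)) y = (c - ln ((B - m a * s)/B) / (2 * m a)) + y^2 / (2 * Bn beta lam K q m (Suc n))" for y
    proof -
      have I: "integral\<^sup>L gauss1 (\<lambda>g. exp (m a * (c + (y + sqrt s * g)^2 / (2*B))))
         = exp (m a * c) * ((B - m a * s)/B) powr (-1/2) * exp (m a * y^2 / (2*(B - m a * s)))"
        by (rule has_bochner_integral_integral_eq[OF quad_step[OF s B B'pos]])
      have R: "(B - m a * s)/B > 0" using B B'pos by simp
      have "ln (exp (m a * c) * ((B - m a * s)/B) powr (-1/2) * exp (m a * y^2 / (2*(B - m a * s))))
          = m a * c + (-1/2) * ln ((B - m a * s)/B) + m a * y^2 / (2*(B - m a * s))"
        using R B B'pos by (simp add: ln_mult ln_powr)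
      then show ?thesis unfolding fstep_def I B' using False
        by (simp add: field_simps)
    qed
    then show ?thesis unfolding fS by auto
  qed
qed



lemma prob_gaussI: "prob_space (gaussI I)"
  unfolding gaussI_def by (rule prob_space_PiM) (rule prob_gauss1)

lemma PiM_single:
  fixes h :: "real \<Rightarrow> real"
  assumes "i \<in> I" "has_bochner_integral gauss1 h v"
  shows "has_bochner_integral (gaussI I) (\<lambda>x. h (x i)) v"
proof -
  have hm: "h \<in> borel_measurable gauss1"
    using assms(2) by (simp add: has_bochner_integral_iff borel_measurable_integrable)
  have g: "(\<lambda>x. x i) \<in> measurable (gaussI I) gauss1"
    unfolding gaussI_def using measurable_component_singleton[OF assms(1), of "\<lambda>_. gauss1"] by simp
  have D: "distr (gaussI I) gauss1 (\<lambda>x. x i) = gauss1"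
    unfolding gaussI_def using distr_PiM_component[of I "\<lambda>_. gauss1" i] prob_gauss1 assms(1) by simp
  have "has_bochner_integral (distr (gaussI I) gauss1 (\<lambda>x. x i)) h v" using D assms(2) by simp
  then show ?thesis
    using g hm by (simp add: has_bochner_integral_iff integrable_distr_eq[OF g hm] integral_distr[OF g hm])
qed

lemma PiM_prod:
  fixes f :: "'i \<Rightarrow> real \<Rightarrow> real"
  assumes "finite I" "\<And>i. i \<in> I \<Longrightarrow> has_bochner_integral gauss1 (f i) (v i)"
  shows "integral\<^sup>L (gaussI I) (\<lambda>x. \<Prod>i\<in>I. f i (x i)) = (\<Prod>i\<in>I. v i)"
proof -
  interpret product_sigma_finite "\<lambda>_::'i. gauss1"
    unfolding product_sigma_finite_def using prob_gauss1 prob_space_imp_sigma_finite by blast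
  have "integral\<^sup>L (gaussI I) (\<lambda>x. \<Prod>i\<in>I. f i (x i)) = (\<Prod>i\<in>I. integral\<^sup>L gauss1 (f i))"
    unfolding gaussI_def
    by (rule product_integral_prod[OF assms(1)]) (use assms(2) in \<open>auto simp: has_bochner_integral_iff\<close>)
  also have "\<dots> = (\<Prod>i\<in>I. v i)"
    using assms(2) by (intro prod.cong) (auto simp: has_bochner_integral_iff)
  finally show ?thesis .
qed

definition Ysum :: "(nat \<Rightarrow> real) \<Rightarrow> nat \<Rightarrow> (nat \<Rightarrow> nat \<Rightarrow> real) \<Rightarrow> nat \<Rightarrow> real" where
  "Ysum q a Js i = (\<Sum>b\<in>{1..a}. sqrt (q b - q (b-1)) * Js b i)"

lemma Ysum_upd:
  assumes "1 \<le> a"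
  shows "Ysum q a (Js(a := g)) i = Ysum q (a-1) Js i + sqrt (q a - q (a-1)) * g i"
proof -
  obtain a' where a': "a = Suc a'" using assms by (cases a) auto
  have "Ysum q a (Js(a := g)) i = (\<Sum>b\<in>{1..a'}. sqrt (q b - q (b-1)) * (Js(a := g)) b i) + sqrt (q a - q (a-1)) * g i"
    unfolding Ysum_def a' by (simp add: sum.cl_ivl_Suc)
  also have "(\<Sum>b\<in>{1..a'}. sqrt (q b - q (b-1)) * (Js(a := g)) b i) = Ysum q (a-1) Js i"
    unfolding Ysum_def a' by (intro sum.cong) auto
  finally show ?thesis .
qed

lemma Ztilde0:
  fixes beta lam :: real and q :: "nat \<Rightarrow> real"
  assumes D: "1 - lam + beta^2 * q K > 0"
  shows "Ztilde beta lam K q N 0 J0 Js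
     = (\<Prod>i<N. sigmaQ beta lam (q K) * exp (ffinal beta lam (q K) (Ysum q K Js i)))"
proof -
  define \<alpha> where "\<alpha> = (lam - beta^2 * q K) / 2"
  have a: "\<alpha> < 1/2" using D \<alpha>_def by simp
  have d: "1 - 2 * \<alpha> = 1 - lam + beta^2 * q K" using \<alpha>_def by simp
  have Y: "(\<Sum>i<N. Ysum q K Js i * z i) = (\<Sum>a\<in>{1..K}. sqrt (q a - q (a-1)) * (\<Sum>i<N. Js a i * z i))" for z :: "nat \<Rightarrow> real"
    unfolding Ysum_def by (simp add: sum_distrib_left sum_distrib_right mult_ac) (rule sum.swap)
  have E: "exp (beta * sqrt (0 / (2 * real N)) * (\<Sum>i<N. \<Sum>j<N. J0 (i, j) * z i * z j)
            - 0 * beta^2 / (4 * real N) * (\<Sum>i<N. (z i)^2)^2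
            + beta * sqrt (1 - 0) * (\<Sum>a\<in>{1..K}. sqrt (q a - q (a-1)) * (\<Sum>i<N. Js a i * z i))
            + (1 - 0) * (- (beta^2 * q K)) / 2 * (\<Sum>i<N. (z i)^2)
            + lam / 2 * (\<Sum>i<N. (z i)^2))
      = (\<Prod>i<N. exp (\<alpha> * (z i)^2 + (beta * Ysum q K Js i) * z i))" for z :: "nat \<Rightarrow> real"
  proof -
    have "beta * (\<Sum>a\<in>{1..K}. sqrt (q a - q (a-1)) * (\<Sum>i<N. Js a i * z i))
            + (- (beta^2 * q K)) / 2 * (\<Sum>i<N. (z i)^2)
            + lam / 2 * (\<Sum>i<N. (z i)^2)
          = (\<Sum>i<N. \<alpha> * (z i)^2 + (beta * Ysum q K Js i) * z i)"
    proof -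
      have s1: "(\<Sum>i<N. \<alpha> * (z i)^2 + (beta * Ysum q K Js i) * z i)
          = \<alpha> * (\<Sum>i<N. (z i)^2) + beta * (\<Sum>i<N. Ysum q K Js i * z i)"
        by (simp add: sum.distrib sum_distrib_left mult.assoc)
      have s2: "(- (beta^2 * q K)) / 2 * S + lam / 2 * S = \<alpha> * S" for S :: real
        by (simp add: \<alpha>_def field_simps)
      show ?thesis unfolding s1 Y using s2[of "\<Sum>i<N. (z i)^2"] by simp
    qed
    then show ?thesis by (simp add: exp_sum)
  qed
  have "Ztilde beta lam K q N 0 J0 Js
     = integral\<^sup>L (gaussI {..<N}) (\<lambda>z. \<Prod>i<N. exp (\<alpha> * (z i)^2 + (beta * Ysum q K Js i) * z i))"
    unfolding Ztilde_def E ..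
  also have "\<dots> = (\<Prod>i<N. (1 - 2*\<alpha>) powr (-1/2) * exp ((beta * Ysum q K Js i)^2 / (2 * (1 - 2*\<alpha>))))"
    by (rule PiM_prod, simp, rule gauss_exp_quad[OF a])
  also have "\<dots> = (\<Prod>i<N. sigmaQ beta lam (q K) * exp (ffinal beta lam (q K) (Ysum q K Js i)))"
  proof (intro prod.cong refl)
    fix i
    have S: "(sigmaQ beta lam (q K))^2 = 1 / (1 - lam + beta^2 * q K)"
      unfolding sigmaQ_def by (rule sigma_sq[OF D])
    have "(beta * Ysum q K Js i)^2 / (2 * (1 - 2*\<alpha>)) = ffinal beta lam (q K) (Ysum q K Js i)"
      unfolding ffinal_def S d using D by (simp add: power_mult_distrib)
    then show "(1 - 2*\<alpha>) powr (-1/2) * exp ((beta * Ysum q K Js i)^2 / (2 * (1 - 2*\<alpha>)))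
        = sigmaQ beta lam (q K) * exp (ffinal beta lam (q K) (Ysum q K Js i))"
      unfolding d sigmaQ_def by simp
  qed
  finally show ?thesis .
qed



lemma fstep_int:
  fixes \<mu> s B c L y :: real
  assumes s: "s \<ge> 0" and B: "B > 0" and B': "B - \<mu> * s > 0" and mu: "\<mu> \<noteq> 0"
  shows "has_bochner_integral gauss1 (\<lambda>x. exp (\<mu> * ((L + c) + (y + sqrt s * x)^2 / (2*B))))
           (exp (\<mu> * L) * exp (\<mu> * fstep \<mu> s (\<lambda>y. c + y^2 / (2*B)) y))"
proof -
  define W where "W = exp (\<mu> * c) * ((B - \<mu> * s)/B) powr (-1/2) * exp (\<mu> * y^2 / (2*(B - \<mu> * s)))"
  have W: "W > 0" unfolding W_def using B B' by simp
  have H: "has_bochner_integral gauss1 (\<lambda>x. exp (\<mu> * ((L + c) + (y + sqrt s * x)^2 / (2*B))))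
     (exp (\<mu> * (L + c)) * ((B - \<mu> * s)/B) powr (-1/2) * exp (\<mu> * y^2 / (2*(B - \<mu> * s))))"
    by (rule quad_step[OF s B B'])
  have I: "integral\<^sup>L gauss1 (\<lambda>g. exp (\<mu> * (c + (y + sqrt s * g)^2 / (2*B)))) = W"
    unfolding W_def by (rule has_bochner_integral_integral_eq[OF quad_step[OF s B B']])
  have f: "exp (\<mu> * fstep \<mu> s (\<lambda>y. c + y^2 / (2*B)) y) = W"
    unfolding fstep_def using mu W I by simp
  have "exp (\<mu> * (L + c)) * ((B - \<mu> * s)/B) powr (-1/2) * exp (\<mu> * y^2 / (2*(B - \<mu> * s)))
      = exp (\<mu> * L) * W"
    unfolding W_def by (simp add: distrib_left exp_add mult_ac)
  then show ?thesis using H f by simp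
qed

lemma fstep_int0:
  fixes s B c L y :: real
  assumes s: "s \<ge> 0"
  shows "has_bochner_integral gauss1 (\<lambda>x. (L + c) + (y + sqrt s * x)^2 / (2*B))
           (L + fstep 0 s (\<lambda>y. c + y^2 / (2*B)) y)"
proof -
  have H: "has_bochner_integral gauss1 (\<lambda>x. (L + c) + (y + sqrt s * x)^2 / (2*B))
     ((L + c) + y^2/(2*B) + s/(2*B))"
    by (rule quad_step0[OF s])
  have I: "integral\<^sup>L gauss1 (\<lambda>g. c + (y + sqrt s * g)^2 / (2*B)) = c + y^2/(2*B) + s/(2*B)"
    by (rule has_bochner_integral_integral_eq[OF quad_step0[OF s]])
  show ?thesis using H I unfolding fstep_def by (simp add: add.assoc)
qed



lemma Zlev_form:
  fixes beta lam :: real and q m :: "nat \<Rightarrow> real"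
  assumes beta: "beta > 0" and D: "1 - lam + beta^2 * q K > 0"
    and mono: "\<And>a. 1 \<le> a \<Longrightarrow> a \<le> K \<Longrightarrow> q (a-1) \<le> q a"
    and Bpos: "\<And>n. n \<le> K \<Longrightarrow> Bn beta lam K q m n > 0"
  shows "n \<le> K \<Longrightarrow> \<forall>J0 Js. Zlev beta lam K q m N 0 n J0 Js
     = (\<Prod>i<N. sigmaQ beta lam (q K) * exp (fnode beta lam K q m n (Ysum q (K-n) Js i)))"
proof (induction n)
  case 0
  show ?case using Ztilde0[where beta=beta and lam=lam and q=q and K=K, OF D] by simp
next
  case (Suc n)
  define \<sigma> where "\<sigma> = sigmaQ beta lam (q K)"
  have sig: "\<sigma> > 0" unfolding \<sigma>_def sigmaQ_def using D by simp
  define a where "a = K - n"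
  define s where "s = q a - q (a-1)"
  define B where "B = Bn beta lam K q m n"
  have a: "1 \<le> a" "a \<le> K" using Suc.prems a_def by auto
  have s: "s \<ge> 0" using mono[OF a] s_def by simp
  have B: "B > 0" using Bpos Suc.prems B_def by simp
  have B': "Bn beta lam K q m (Suc n) = B - m a * s"
    using Bn_Suc[of n K] Suc.prems unfolding a_def s_def B_def by simp
  have B'pos: "B - m a * s > 0" using Bpos[of "Suc n"] Suc.prems B' by simp
  obtain c where c: "fnode beta lam K q m n = (\<lambda>y. c + y^2 / (2 * B))"
    using fnode_quad[OF beta D mono Bpos, of n] Suc.prems B_def by auto
  have fS: "fnode beta lam K q m (Suc n) = fstep (m a) s (\<lambda>y. c + y^2 / (2 * B))"
    using c unfolding a_def s_def by simp
  have Km: "K - Suc n = a - 1" using a_def by simp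
  show ?case
  proof (intro allI)
    fix J0 Js
    define Yp where "Yp i = Ysum q (a-1) Js i" for i
    have IH: "Zlev beta lam K q m N 0 n J0 (Js(a := g))
        = (\<Prod>i<N. \<sigma> * exp (c + (Yp i + sqrt s * g i)^2 / (2 * B)))" for g
      using Suc.IH Suc.prems unfolding \<sigma>_def Yp_def s_def
      by (simp add: c a_def[symmetric] Ysum_upd[OF a(1)])
    have Zs: "Zlev beta lam K q m N 0 (Suc n) J0 Js = Zstep N a (m a) (Zlev beta lam K q m N 0 n) J0 Js"
      unfolding a_def by simp
    have goal: "(\<Prod>i<N. sigmaQ beta lam (q K) * exp (fnode beta lam K q m (Suc n) (Ysum q (K - Suc n) Js i)))
        = (\<Prod>i<N. \<sigma> * exp (fstep (m a) s (\<lambda>y. c + y^2 / (2 * B)) (Yp i)))"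
      unfolding fS Km Yp_def \<sigma>_def ..
    have main: "Zstep N a (m a) (Zlev beta lam K q m N 0 n) J0 Js
        = (\<Prod>i<N. \<sigma> * exp (fstep (m a) s (\<lambda>y. c + y^2 / (2 * B)) (Yp i)))"
    proof (cases "m a = 0")
      case True
      have L: "ln (Zlev beta lam K q m N 0 n J0 (Js(a := g)))
          = (\<Sum>i<N. (ln \<sigma> + c) + (Yp i + sqrt s * g i)^2 / (2 * B))" for g
        unfolding IH using sig by (simp add: ln_prod ln_mult add.assoc)
      have HB: "has_bochner_integral (gaussI {..<N}) (\<lambda>g. \<Sum>i<N. (ln \<sigma> + c) + (Yp i + sqrt s * g i)^2 / (2 * B))
          (\<Sum>i<N. ln \<sigma> + fstep 0 s (\<lambda>y. c + y^2 / (2 * B)) (Yp i))"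
        by (intro has_bochner_integral_sum PiM_single fstep_int0[OF s]) auto
      have "Zstep N a (m a) (Zlev beta lam K q m N 0 n) J0 Js
          = exp (\<Sum>i<N. ln \<sigma> + fstep 0 s (\<lambda>y. c + y^2 / (2 * B)) (Yp i))"
        unfolding Zstep_def L using True has_bochner_integral_integral_eq[OF HB] by simp
      also have "\<dots> = (\<Prod>i<N. \<sigma> * exp (fstep (m a) s (\<lambda>y. c + y^2 / (2 * B)) (Yp i)))"
        using True sig by (simp add: exp_sum exp_add)
      finally show ?thesis .
    next
      case False
      define \<mu> where "\<mu> = m a"
      have mu: "\<mu> \<noteq> 0" using False \<mu>_def by simp
      have B'': "B - \<mu> * s > 0" using B'pos \<mu>_def by simp
      have P: "(Zlev beta lam K q m N 0 n J0 (Js(a := g))) powr \<mu>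
          = (\<Prod>i<N. exp (\<mu> * ((ln \<sigma> + c) + (Yp i + sqrt s * g i)^2 / (2 * B))))" for g
        unfolding IH prod_powr_distrib
      proof (intro prod.cong refl)
        fix i
        show "(\<sigma> * exp (c + (Yp i + sqrt s * g i)^2 / (2 * B))) powr \<mu>
            = exp (\<mu> * ((ln \<sigma> + c) + (Yp i + sqrt s * g i)^2 / (2 * B)))"
          using sig by (simp add: powr_def ln_mult add.assoc mult.commute)
      qed
      have I: "integral\<^sup>L (gaussI {..<N}) (\<lambda>g. \<Prod>i<N. exp (\<mu> * ((ln \<sigma> + c) + (Yp i + sqrt s * g i)^2 / (2 * B))))
          = (\<Prod>i<N. exp (\<mu> * ln \<sigma>) * exp (\<mu> * fstep \<mu> s (\<lambda>y. c + y^2 / (2 * B)) (Yp i)))"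
        by (rule PiM_prod, simp, rule fstep_int[OF s B B'' mu])
      have "Zstep N a (m a) (Zlev beta lam K q m N 0 n) J0 Js
          = (\<Prod>i<N. exp (\<mu> * ln \<sigma>) * exp (\<mu> * fstep \<mu> s (\<lambda>y. c + y^2 / (2 * B)) (Yp i))) powr (1 / \<mu>)"
        unfolding Zstep_def \<mu>_def[symmetric] P I using mu by simp
      also have "\<dots> = (\<Prod>i<N. (exp (\<mu> * ln \<sigma>) * exp (\<mu> * fstep \<mu> s (\<lambda>y. c + y^2 / (2 * B)) (Yp i))) powr (1 / \<mu>))"
        by (rule prod_powr_distrib)
      also have "\<dots> = (\<Prod>i<N. \<sigma> * exp (fstep (m a) s (\<lambda>y. c + y^2 / (2 * B)) (Yp i)))"
      proof (intro prod.cong refl)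
        fix i
        have "(exp (\<mu> * ln \<sigma>) * exp (\<mu> * fstep \<mu> s (\<lambda>y. c + y^2 / (2 * B)) (Yp i))) powr (1 / \<mu>)
            = exp (ln \<sigma> + fstep \<mu> s (\<lambda>y. c + y^2 / (2 * B)) (Yp i))"
          using mu by (simp add: powr_def exp_add[symmetric] field_simps)
        then show "(exp (\<mu> * ln \<sigma>) * exp (\<mu> * fstep \<mu> s (\<lambda>y. c + y^2 / (2 * B)) (Yp i))) powr (1 / \<mu>)
            = \<sigma> * exp (fstep (m a) s (\<lambda>y. c + y^2 / (2 * B)) (Yp i))"
          using sig by (simp add: exp_add \<mu>_def)
      qed
      finally show ?thesis .
    qed
    show "Zlev beta lam K q m N 0 (Suc n) J0 Js
       = (\<Prod>i<N. sigmaQ beta lam (q K) * exp (fnode beta lam K q m (Suc n) (Ysum q (K - Suc n) Js i)))"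
      unfolding goal Zs by (rule main)
  qed
qed



lemma zero_prefix:
  fixes q :: "nat \<Rightarrow> real"
  assumes "\<And>j. j \<le> p \<Longrightarrow> q j = 0" "p \<le> K"
  shows "fnode beta lam K q m (K - p) = fnode beta lam K q m K"
  using assms
proof (induction p)
  case 0 then show ?case by simp
next
  case (Suc p)
  have e: "K - p = Suc (K - Suc p)" using Suc.prems by simp
  have e2: "K - (K - Suc p) = Suc p" using Suc.prems by simp
  have "fnode beta lam K q m (K - p) = fnode beta lam K q m (K - Suc p)"
    unfolding e using Suc.prems by (simp add: e2 fstep0[abs_def])
  then show ?case using Suc by simp
qed

theorem mainTheorem14:
  fixes beta lam :: real and K N :: nat and q m :: "nat \<Rightarrow> real"
  assumes "beta > 0"
    and "K \<ge> 1"
    and "q 0 = 0"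
    and "\<And>a. 1 \<le> a \<Longrightarrow> a \<le> K \<Longrightarrow> q (a-1) \<le> q a"
    and "0 \<le> m 1"
    and "\<And>a. 1 \<le> a \<Longrightarrow> a < K \<Longrightarrow> m a \<le> m (Suc a)"
    and "m K \<le> 1"
    and "1 - lam + beta^2 * q K > 0"
    and "\<And>s. 0 \<le> s \<Longrightarrow> s \<le> q K \<Longrightarrow>
           beta^2 * (sigmaQ beta lam (q K))^2 * integral {s..q K} (xfun K q m) < 1"
    and "N \<ge> 1"
  shows "phiN beta lam K q m N 0 = ln (sigmaQ beta lam (q K)) + parisi_f beta lam K q m 0 0"
proof -
  note beta = assms(1) and q0 = assms(3) and mono = assms(4) and D = assms(8) and cond = assms(9)
  have qm: "\<And>i j. i \<le> j \<Longrightarrow> j \<le> K \<Longrightarrow> q i \<le> q j"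
    using q_mono[of K q, OF mono] by blast
  define \<sigma> where "\<sigma> = sigmaQ beta lam (q K)"
  have sig: "\<sigma> > 0" unfolding \<sigma>_def sigmaQ_def using D by simp
  have S: "\<sigma>^2 = 1 / (1 - lam + beta^2 * q K)"
    unfolding \<sigma>_def sigmaQ_def by (rule sigma_sq[OF D])
  have Bpos: "Bn beta lam K q m n > 0" if n: "n \<le> K" for n
  proof -
    have I: "integral {q (K-n)..q K} (xfun K q m) = Sfun K q m n"
      using xfun_tail[where K=K and q=q and m=m and n=n, OF mono n] by (rule integral_unique)
    have "0 \<le> q (K-n)" using qm[of 0 "K-n"] q0 by simp
    moreover have "q (K-n) \<le> q K" using qm[of "K-n" K] by simp
    ultimately have "beta^2 * \<sigma>^2 * integral {q (K-n)..q K} (xfun K q m) < 1"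
      unfolding \<sigma>_def by (rule cond)
    then have "beta^2 * \<sigma>^2 * Sfun K q m n < 1" unfolding I .
    then have "beta^2 * Sfun K q m n < 1 - lam + beta^2 * q K"
      unfolding S using D by (simp add: field_simps)
    then show ?thesis unfolding Bn_def using beta by (simp add: field_simps)
  qed
  have Z: "Zlev beta lam K q m N 0 K J0 (\<lambda>_ _. 0) = (\<sigma> * exp (fnode beta lam K q m K 0))^N" for J0
    using Zlev_form[OF beta D mono Bpos, of K N] unfolding \<sigma>_def
    by (simp add: Ysum_def)
  have phi: "phiN beta lam K q m N 0 = ln \<sigma> + fnode beta lam K q m K 0"
  proof -
    interpret prob_space "gaussI ({..<N} \<times> {..<N})" by (rule prob_gaussI)
    have "ln ((\<sigma> * exp (fnode beta lam K q m K 0))^N) = real N * (ln \<sigma> + fnode beta lam K q m K 0)"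
      using sig by (simp add: ln_realpow ln_mult)
    then show ?thesis unfolding phiN_def Z using assms(10) by (simp add: prob_space)
  qed
  have par: "parisi_f beta lam K q m 0 0 = fnode beta lam K q m K 0"
  proof (cases "q K \<le> 0")
    case True
    have z: "q j = 0" if "j \<le> K" for j using qm[of 0 j] qm[of j K] that q0 True by simp
    have "fnode beta lam K q m (K - K) = fnode beta lam K q m K"
      by (rule zero_prefix) (use z in auto)
    then show ?thesis unfolding parisi_f_def using True by simp
  next
    case False
    define P where "P a \<longleftrightarrow> 1 \<le> a \<and> a \<le> K \<and> q (a-1) \<le> 0 \<and> 0 < q a" for a
    have ex: "\<exists>a. P a"
    proof -
      define a0 where "a0 = (LEAST j. q j > 0)"
      have qK: "q K > 0" using False by simp
      have qa0: "q a0 > 0" unfolding a0_def by (rule LeastI[of "\<lambda>j. q j > 0", OF qK])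
      have a0K: "a0 \<le> K" unfolding a0_def by (rule Least_le[of "\<lambda>j. q j > 0", OF qK])
      have a01: "a0 \<ge> 1" using qa0 q0 by (cases a0) auto
      have lt: "a0 - 1 < a0" using a01 by simp
      have "\<not> q (a0-1) > 0" using not_less_Least[of "a0-1" "\<lambda>j. q j > 0"] lt unfolding a0_def by blast
      then show ?thesis unfolding P_def using a01 a0K qa0 by (intro exI[of _ a0]) simp
    qed
    define a where "a = (LEAST a. P a)"
    have Pa: "P a" unfolding a_def using ex by (rule LeastI_ex)
    have a: "1 \<le> a" "a \<le> K" "q (a-1) \<le> 0" "0 < q a" using Pa unfolding P_def by auto
    have z: "q j = 0" if "j \<le> a - 1" for j
    proof -
      have j: "j \<le> K" "a - 1 \<le> K" using that a by auto
      show ?thesis using qm[of 0 j] qm[of j "a-1"] j that q0 a by simp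
    qed
    have zp: "fnode beta lam K q m (K - (a-1)) = fnode beta lam K q m K"
      by (rule zero_prefix) (use z a in auto)
    have e1: "K - (a-1) = Suc (K - a)" and e2: "K - (K - a) = a" using a by auto
    have zp2: "fnode beta lam K q m (Suc (K - a)) = fnode beta lam K q m K" using zp by (simp only: e1)
    have "fnode beta lam K q m K = fnode beta lam K q m (Suc (K - a))" by (rule zp2[symmetric])
    also have "\<dots> = fstep (m (K - (K - a))) (q (K - (K - a)) - q (K - (K - a) - 1)) (fnode beta lam K q m (K - a))"
      by (simp only: fnode.simps)
    also have "\<dots> = fstep (m a) (q a - q (a-1)) (fnode beta lam K q m (K - a))"
      by (simp only: e2)
    finally have "fnode beta lam K q m K = fstep (m a) (q a - q (a-1)) (fnode beta lam K q m (K - a))" .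
    moreover have "q (a-1) = 0" using z by simp
    moreover have "(LEAST a. 1 \<le> a \<and> a \<le> K \<and> q (a-1) \<le> 0 \<and> 0 < q a) = a"
      unfolding a_def P_def ..
    ultimately show ?thesis unfolding parisi_f_def using False by (simp add: Let_def)
  qed
  show ?thesis unfolding phi par \<sigma>_def ..
qed

end
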